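(* Let $m\ge 3$, $n\ge 2$ be integers with $m\ne 2n-1$. Then the squid graph $\mathrm{Sq}(m;1^n)$ is not Schur positive.
   Context: The squid graph $\mathrm{Sq}(m;1^n)$ is obtained from the cycle $C_m$ on $m$ vertices by attaching $n$ new pendant vertices (leaves), each joined by an edge to one common vertex $v_0$ of the cycle. For a finite simple graph $G$, the chromatic symmetric function is $X_G=\sum_{\kappa}\prod_{v\in V(G)}x_{\kappa(v)}$ over proper colorings $\kappa:V(G)\to\{1,2,\dots\}$; $G$ is Schur positive if all coefficients of $X_G$ in the Schur basis are nonnegative. *)

theory Defs
  imports "HOL-Library.FuncSet"
begin

text \<open>Graphs: a finite vertex set V with a symmetric irreflexive adjacency relation E.
Colours are natural numbers (variables x_0, x_1, ...), a harmless relabelling of x_1, x_2, ...\<close>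

definition proper_coloring :: "'a set \<Rightarrow> ('a \<Rightarrow> 'a \<Rightarrow> bool) \<Rightarrow> ('a \<Rightarrow> nat) \<Rightarrow> bool" where
  "proper_coloring V E \<kappa> \<longleftrightarrow> \<kappa> \<in> extensional V \<and> (\<forall>u\<in>V. \<forall>v\<in>V. E u v \<longrightarrow> \<kappa> u \<noteq> \<kappa> v)"

text \<open>Coefficient of the monomial x^alpha (alpha i = exponent of x_i) in X_G.\<close>
definition csf_coeff :: "'a set \<Rightarrow> ('a \<Rightarrow> 'a \<Rightarrow> bool) \<Rightarrow> (nat \<Rightarrow> nat) \<Rightarrow> nat" where
  "csf_coeff V E \<alpha> = card {\<kappa>. proper_coloring V E \<kappa> \<and> (\<forall>i. card {v\<in>V. \<kappa> v = i} = \<alpha> i)}"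

definition is_partition_of :: "nat list \<Rightarrow> nat \<Rightarrow> bool" where
  "is_partition_of lam N \<longleftrightarrow> sorted_wrt (\<ge>) lam \<and> (\<forall>x\<in>set lam. 0 < x) \<and> sum_list lam = N"

definition young_cells :: "nat list \<Rightarrow> (nat \<times> nat) set" where
  "young_cells lam = {(i, j). i < length lam \<and> j < lam ! i}"

definition is_ssyt :: "nat list \<Rightarrow> (nat \<times> nat \<Rightarrow> nat) \<Rightarrow> bool" where
  "is_ssyt lam T \<longleftrightarrow> T \<in> extensional (young_cells lam) \<and>
     (\<forall>i j. (i, j) \<in> young_cells lam \<and> (i, Suc j) \<in> young_cells lam \<longrightarrow> T (i, j) \<le> T (i, Suc j)) \<and>
     (\<forall>i j. (i, j) \<in> young_cells lam \<and> (Suc i, j) \<in> young_cells lam \<longrightarrow> T (i, j) < T (Suc i, j))"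

definition kostka :: "nat list \<Rightarrow> (nat \<Rightarrow> nat) \<Rightarrow> nat" where
  "kostka lam \<alpha> = card {T. is_ssyt lam T \<and> (\<forall>k. card {c\<in>young_cells lam. T c = k} = \<alpha> k)}"

text \<open>Schur positivity: X_G = sum over partitions lambda of |V| of c_lambda s_lambda with all
c_lambda \<ge> 0 (the Schur functions form a basis, so the coefficients are unique).\<close>
definition schur_positive :: "'a set \<Rightarrow> ('a \<Rightarrow> 'a \<Rightarrow> bool) \<Rightarrow> bool" where
  "schur_positive V E \<longleftrightarrow>
     (\<exists>c :: nat list \<Rightarrow> int.
        (\<forall>lam. is_partition_of lam (card V) \<longrightarrow> 0 \<le> c lam) \<and>
        (\<forall>\<alpha>. int (csf_coeff V E \<alpha>) =
              (\<Sum>lam\<in>{lam. is_partition_of lam (card V)}. c lam * int (kostka lam \<alpha>))))"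

text \<open>Squid graph Sq(m;1^n): vertices 0..m+n-1; cycle 0-1-...-(m-1)-0; leaves m..m+n-1 attached to 0.\<close>
definition squid_vertices :: "nat \<Rightarrow> nat \<Rightarrow> nat set" where
  "squid_vertices m n = {..<m + n}"

definition squid_adj :: "nat \<Rightarrow> nat \<Rightarrow> nat \<Rightarrow> nat \<Rightarrow> bool" where
  "squid_adj m n u v \<longleftrightarrow>
     (u < m \<and> v < m \<and> (v = Suc u mod m \<or> u = Suc v mod m)) \<or>
     (u = 0 \<and> m \<le> v \<and> v < m + n) \<or> (v = 0 \<and> m \<le> u \<and> u < m + n)"

end

theory Submission
  imports Defs
begin


lemma young_cells_Sigma: "young_cells lam = Sigma {..<length lam} (\<lambda>i. {..<lam!i})"
  by (auto simp: young_cells_def)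

lemma finite_young: "finite (young_cells lam)"
  unfolding young_cells_Sigma by auto

lemma young_up:
  assumes "is_partition_of lam N" "(i,j) \<in> young_cells lam" "i' \<le> i"
  shows "(i',j) \<in> young_cells lam"
proof -
  have s: "sorted_wrt (\<ge>) lam" using assms(1) by (simp add: is_partition_of_def)
  have "i < length lam" "j < lam!i" using assms(2) by (auto simp: young_cells_def)
  moreover have "lam!i \<le> lam!i'"
  proof (cases "i' = i")
    case False
    then have "i' < i" using assms(3) by simp
    then show ?thesis using s \<open>i < length lam\<close> by (auto simp: sorted_wrt_iff_nth_less)
  qed simp
  ultimately show ?thesis using assms(3) by (auto simp: young_cells_def)
qed

lemma young_left: "(i,j) \<in> young_cells lam \<Longrightarrow> j' \<le> j \<Longrightarrow> (i,j') \<in> young_cells lam"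
  by (auto simp: young_cells_def)

lemma row_mono:
  assumes "is_ssyt lam T" "(i,j) \<in> young_cells lam" "j' \<le> j"
  shows "T (i,j') \<le> T (i,j)"
  using assms(2,3)
proof (induction j)
  case 0 then show ?case by simp
next
  case (Suc j)
  show ?case
  proof (cases "j' = Suc j")
    case False
    then have "j' \<le> j" using Suc by simp
    have yj: "(i,j) \<in> young_cells lam" using young_left[OF Suc.prems(1)] by simp
    have "T (i,j') \<le> T (i,j)" using Suc.IH[OF yj \<open>j' \<le> j\<close>] .
    also have "\<dots> \<le> T (i, Suc j)" using assms(1) yj Suc.prems(1) by (simp add: is_ssyt_def)
    finally show ?thesis .
  qed simp
qed

lemma col_pos:
  assumes "is_partition_of lam N" "is_ssyt lam T" "(Suc i, j) \<in> young_cells lam"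
  shows "1 \<le> T (Suc i, j)"
proof -
  have "(i,j) \<in> young_cells lam" using young_up[OF assms(1,3)] by simp
  then have "T (i,j) < T (Suc i, j)" using assms(2,3) by (simp add: is_ssyt_def)
  then show ?thesis by simp
qed

lemma downclosed_card:
  assumes "finite J" "\<And>j j'. j \<in> J \<Longrightarrow> j' \<le> j \<Longrightarrow> j' \<in> J" "card J = t"
  shows "J = {..<t}"
proof -
  have "J \<subseteq> {..<t}"
  proof
    fix x assume "x \<in> J"
    show "x \<in> {..<t}"
    proof (rule ccontr)
      assume "x \<notin> {..<t}"
      then have "{..<Suc x} \<subseteq> J" using assms(2) \<open>x \<in> J\<close> by auto
      then have "card {..<Suc x} \<le> card J" using assms(1) card_mono by blast
      then show False using \<open>x \<notin> {..<t}\<close> assms(3) by simp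
    qed
  qed
  then show ?thesis using assms(1,3) by (simp add: card_subset_eq)
qed

lemma ssyt_facts:
  assumes P: "is_partition_of lam N" and T: "is_ssyt lam T"
    and c: "\<forall>x. card {c\<in>young_cells lam. T c = x} = \<alpha> x"
    and a0: "\<alpha> 0 = Suc a" and a1: "\<alpha> 1 \<le> a"
  shows "(0,a) \<in> young_cells lam \<and> T (0,a) = 0 \<and> ((0, Suc a) \<in> young_cells lam \<longrightarrow> T (0, Suc a) \<noteq> 0)
     \<and> ((1,a) \<in> young_cells lam \<longrightarrow> 2 \<le> T (1,a))"
proof -
  let ?Y = "young_cells lam"
  define J where "J = {j. (0,j) \<in> ?Y \<and> T (0,j) = 0}"
  have Z: "{c\<in>?Y. T c = 0} = (\<lambda>j. (0,j)) ` J"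
  proof (rule set_eqI, rule iffI)
    fix c assume "c \<in> {c\<in>?Y. T c = 0}"
    then obtain i j where cij: "c = (i,j)" "(i,j) \<in> ?Y" "T (i,j) = 0" by (cases c) auto
    have "i = 0"
    proof (rule ccontr)
      assume "i \<noteq> 0" then obtain i' where "i = Suc i'" by (cases i) auto
      then show False using col_pos[OF P T] cij by force
    qed
    then show "c \<in> (\<lambda>j. (0,j)) ` J" using cij by (auto simp: J_def)
  qed (auto simp: J_def)
  have finJ: "finite J"
  proof -
    have "J \<subseteq> snd ` ?Y" by (force simp: J_def)
    then show ?thesis using finite_young finite_surj by blast
  qed
  have "card J = Suc a"
  proof -
    have "card ((\<lambda>j. (0::nat,j)) ` J) = card J" by (rule card_image) (auto simp: inj_on_def)
    then show ?thesis using Z c a0 by metis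
  qed
  have dc: "j' \<in> J" if "j \<in> J" "j' \<le> j" for j j'
  proof -
    have y: "(0,j) \<in> ?Y" "T (0,j) = 0" using that by (auto simp: J_def)
    have "(0,j') \<in> ?Y" using young_left[OF y(1) that(2)] .
    moreover have "T (0,j') \<le> T (0,j)" using row_mono[OF T y(1) that(2)] .
    ultimately show ?thesis using y by (simp add: J_def)
  qed
  have Jeq: "J = {..<Suc a}"
    using downclosed_card[of J "Suc a"] finJ dc \<open>card J = Suc a\<close> by blast
  have "a \<in> J" "Suc a \<notin> J" using Jeq by simp_all
  then have r1: "(0,a) \<in> ?Y \<and> T (0,a) = 0"
    and r2: "(0, Suc a) \<in> ?Y \<longrightarrow> T (0, Suc a) \<noteq> 0" unfolding J_def by simp_all
  have r3: "2 \<le> T (1,a)" if y: "(1,a) \<in> ?Y"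
  proof (rule ccontr)
    assume "\<not> 2 \<le> T (1,a)"
    then have le1: "T (1,a) \<le> 1" by simp
    have "(\<lambda>j. (1::nat,j)) ` {..a} \<subseteq> {c\<in>?Y. T c = 1}"
    proof
      fix c assume "c \<in> (\<lambda>j. (1::nat,j)) ` {..a}"
      then obtain j where j: "c = (1,j)" "j \<le> a" by auto
      have yj: "(1,j) \<in> ?Y" using young_left[OF y j(2)] .
      have "T (1,j) \<le> T (1,a)" using row_mono[OF T y j(2)] .
      moreover have "1 \<le> T (Suc 0,j)" using col_pos[OF P T] yj by simp
      ultimately show "c \<in> {c\<in>?Y. T c = 1}" using j yj le1 by simp
    qed
    then have "card ((\<lambda>j. (1::nat,j)) ` {..a}) \<le> card {c\<in>?Y. T c = 1}"
      using finite_young by (intro card_mono) auto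
    moreover have "card ((\<lambda>j. (1::nat,j)) ` {..a}) = Suc a"
      by (subst card_image) (auto simp: inj_on_def)
    ultimately show False using c a1 by (metis not_less_eq_eq)
  qed
  show ?thesis using r1 r2 r3 by blast
qed

lemma kostka_mono:
  assumes P: "is_partition_of lam N" and a0: "\<alpha> 0 = Suc a" and a1: "\<alpha> 1 \<le> a"
    and a3: "\<forall>x\<ge>3. \<alpha> x = 0"
  shows "kostka lam \<alpha> \<le> kostka lam (\<alpha>(0 := a, 1 := Suc (\<alpha> 1)))"
proof -
  let ?Y = "young_cells lam"
  let ?\<beta> = "\<alpha>(0 := a, 1 := Suc (\<alpha> 1))"
  let ?A = "{T. is_ssyt lam T \<and> (\<forall>x. card {c\<in>?Y. T c = x} = \<alpha> x)}"
  let ?B = "{T. is_ssyt lam T \<and> (\<forall>x. card {c\<in>?Y. T c = x} = ?\<beta> x)}"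
  define \<phi> where "\<phi> T = T((0,a) := 1)" for T :: "nat \<times> nat \<Rightarrow> nat"
  have finB: "finite ?B"
  proof (rule finite_subset)
    show "?B \<subseteq> PiE ?Y (\<lambda>_. {..<3})"
    proof
      fix T assume T: "T \<in> ?B"
      have "T c < 3" if c: "c \<in> ?Y" for c
      proof (rule ccontr)
        assume "\<not> T c < 3"
        then have "?\<beta> (T c) = 0" using a3 by auto
        then have "card {c'\<in>?Y. T c' = T c} = 0" using T by auto
        moreover have "finite {c'\<in>?Y. T c' = T c}" using finite_young by auto
        moreover have "c \<in> {c'\<in>?Y. T c' = T c}" using c by simp
        ultimately show False by (metis card_0_eq empty_iff)
      qed
      moreover have "T \<in> extensional ?Y" using T by (simp add: is_ssyt_def)
      ultimately show "T \<in> PiE ?Y (\<lambda>_. {..<3})" by (auto simp: PiE_def Pi_def)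
    qed
    show "finite (PiE ?Y (\<lambda>_. {..<3::nat}))" using finite_young by (intro finite_PiE) auto
  qed
  have inj: "inj_on \<phi> ?A"
  proof (rule inj_onI)
    fix T1 T2 assume T1: "T1 \<in> ?A" and T2: "T2 \<in> ?A" and e: "\<phi> T1 = \<phi> T2"
    have "T1 (0,a) = 0" "T2 (0,a) = 0"
      using ssyt_facts[OF P _ _ a0 a1] T1 T2 by blast+
    then show "T1 = T2" using e unfolding \<phi>_def by (metis fun_upd_triv fun_upd_upd)
  qed
  have img: "\<phi> ` ?A \<subseteq> ?B"
  proof
    fix T' assume "T' \<in> \<phi> ` ?A"
    then obtain T where TA: "T \<in> ?A" and T'd: "T' = \<phi> T" by blast
    have T: "is_ssyt lam T" and c: "\<forall>x. card {c\<in>?Y. T c = x} = \<alpha> x" using TA by auto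
    have f: "(0,a) \<in> ?Y" "T (0,a) = 0" "(0, Suc a) \<in> ?Y \<longrightarrow> T (0, Suc a) \<noteq> 0"
       "(1,a) \<in> ?Y \<longrightarrow> 2 \<le> T (1,a)"
      using ssyt_facts[OF P T c a0 a1] by blast+
    have ext: "T \<in> extensional ?Y" and rw: "\<forall>i j. (i, j) \<in> ?Y \<and> (i, Suc j) \<in> ?Y \<longrightarrow> T (i, j) \<le> T (i, Suc j)"
      and cl: "\<forall>i j. (i, j) \<in> ?Y \<and> (Suc i, j) \<in> ?Y \<longrightarrow> T (i, j) < T (Suc i, j)"
      using T by (auto simp: is_ssyt_def)
    have s1: "T' \<in> extensional ?Y" using ext f(1) unfolding T'd \<phi>_def by (auto simp: extensional_def)
    have s2: "T' (i, j) \<le> T' (i, Suc j)" if "(i, j) \<in> ?Y" "(i, Suc j) \<in> ?Y" for i j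
    proof -
      have "T (i,j) \<le> T (i, Suc j)" using rw that by blast
      then show ?thesis using f that unfolding T'd \<phi>_def by auto
    qed
    have s3: "T' (i, j) < T' (Suc i, j)" if "(i, j) \<in> ?Y" "(Suc i, j) \<in> ?Y" for i j
    proof -
      have "T (i,j) < T (Suc i, j)" using cl that by blast
      then show ?thesis using f that unfolding T'd \<phi>_def by auto
    qed
    have ss: "is_ssyt lam T'" using s1 s2 s3 by (simp add: is_ssyt_def)
    have fin: "finite {c\<in>?Y. T c = x}" for x using finite_young by auto
    have cnt: "card {c\<in>?Y. T' c = x} = ?\<beta> x" for x
    proof -
      consider "x = 0" | "x = 1" | "x \<noteq> 0 \<and> x \<noteq> 1" by blast
      then show ?thesis
      proof cases
        case 1
        have "{c\<in>?Y. T' c = x} = {c\<in>?Y. T c = 0} - {(0,a)}" using 1 f unfolding T'd \<phi>_def by auto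
        then have "card {c\<in>?Y. T' c = x} = card {c\<in>?Y. T c = 0} - 1" using f fin by simp
        then show ?thesis using 1 c a0 by simp
      next
        case 2
        have "{c\<in>?Y. T' c = x} = insert (0,a) {c\<in>?Y. T c = 1}" using 2 f unfolding T'd \<phi>_def by auto
        then have "card {c\<in>?Y. T' c = x} = Suc (card {c\<in>?Y. T c = 1})" using f fin by simp
        then show ?thesis using 2 c by simp
      next
        case 3
        have "{c\<in>?Y. T' c = x} = {c\<in>?Y. T c = x}" using 3 f unfolding T'd \<phi>_def by auto
        then show ?thesis using 3 c by simp
      qed
    qed
    show "T' \<in> ?B" using ss cnt by simp
  qed
  have "card ?A \<le> card ?B" using card_inj_on_le[OF inj img finB] .
  then show ?thesis by (simp add: kostka_def)
qed



lemma card_pos_of_mem: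
  assumes "finite A" "\<forall>x. card {a\<in>A. f a = x} = \<gamma> x" "a \<in> A"
  shows "0 < \<gamma> (f a)"
proof -
  have "a \<in> {a'\<in>A. f a' = f a}" using assms(3) by simp
  moreover have "finite {a'\<in>A. f a' = f a}" using assms(1) by simp
  ultimately have "0 < card {a'\<in>A. f a' = f a}" by (metis card_gt_0_iff empty_iff)
  then show ?thesis using assms(2) by simp
qed

lemma not_sp_from:
  assumes lt: "csf_coeff V E (\<alpha>(0 := a, 1 := Suc (\<alpha> 1))) < csf_coeff V E \<alpha>"
    and a0: "\<alpha> 0 = Suc a" and a1: "\<alpha> 1 \<le> a" and a3: "\<forall>x\<ge>3. \<alpha> x = 0"
  shows "\<not> schur_positive V E"
proof
  assume "schur_positive V E"
  then obtain c :: "nat list \<Rightarrow> int" where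
    cpos: "\<forall>lam. is_partition_of lam (card V) \<longrightarrow> 0 \<le> c lam" and
    ceq: "\<forall>\<alpha>. int (csf_coeff V E \<alpha>) =
              (\<Sum>lam\<in>{lam. is_partition_of lam (card V)}. c lam * int (kostka lam \<alpha>))"
    unfolding schur_positive_def by blast
  let ?\<beta> = "\<alpha>(0 := a, 1 := Suc (\<alpha> 1))"
  have "int (csf_coeff V E \<alpha>) = (\<Sum>lam\<in>{lam. is_partition_of lam (card V)}. c lam * int (kostka lam \<alpha>))"
    using ceq by blast
  also have "\<dots> \<le> (\<Sum>lam\<in>{lam. is_partition_of lam (card V)}. c lam * int (kostka lam ?\<beta>))"
  proof (rule sum_mono)
    fix lam assume "lam \<in> {lam. is_partition_of lam (card V)}"
    then have P: "is_partition_of lam (card V)" by simp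
    have "kostka lam \<alpha> \<le> kostka lam ?\<beta>" using kostka_mono[OF P a0 a1 a3] .
    then show "c lam * int (kostka lam \<alpha>) \<le> c lam * int (kostka lam ?\<beta>)"
      using cpos P by (intro mult_left_mono) auto
  qed
  also have "\<dots> = int (csf_coeff V E ?\<beta>)" using ceq by metis
  finally show False using lt by simp
qed

abbreviation "SV m n \<equiv> squid_vertices m n"
abbreviation "SE m n \<equiv> squid_adj m n"

lemma proper_cycle:
  assumes "proper_coloring (SV m n) (SE m n) \<kappa>" "i < m"
  shows "\<kappa> i \<noteq> \<kappa> (Suc i mod m)"
proof -
  define x where "x = Suc i mod m"
  have "0 < m" using assms(2) by simp
  then have "x < m" unfolding x_def by simp
  then have "i \<in> SV m n" "x \<in> SV m n" "SE m n i x"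
    using assms(2) unfolding squid_vertices_def squid_adj_def x_def[symmetric] by auto
  then show ?thesis using assms(1) unfolding proper_coloring_def x_def by blast
qed

lemma proper_leaf:
  assumes "proper_coloring (SV m n) (SE m n) \<kappa>" "m \<le> l" "l < m + n" "0 < m"
  shows "\<kappa> l \<noteq> \<kappa> 0"
proof -
  have "l \<in> SV m n" "0 \<in> SV m n" "SE m n l 0"
    using assms by (auto simp: squid_vertices_def squid_adj_def)
  then show ?thesis using assms(1) unfolding proper_coloring_def by blast
qed

lemma proper_restrict:
  assumes "0 < m" "\<forall>i<m. f i \<noteq> f (Suc i mod m)" "\<forall>l. m \<le> l \<and> l < m + n \<longrightarrow> f l \<noteq> f 0"
  shows "proper_coloring (SV m n) (SE m n) (restrict f (SV m n))"
  unfolding proper_coloring_def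
proof (intro conjI ballI impI)
  show "restrict f (SV m n) \<in> extensional (SV m n)" by simp
  fix u v assume u: "u \<in> SV m n" and v: "v \<in> SV m n" and e: "SE m n u v"
  have "f u \<noteq> f v"
    using e assms unfolding squid_adj_def by (metis)
  then show "restrict f (SV m n) u \<noteq> restrict f (SV m n) v" using u v by simp
qed

lemma cyc_bound:
  fixes g :: "nat \<Rightarrow> nat"
  assumes "0 < m" "\<forall>i<m. g i \<noteq> g (Suc i mod m)"
  shows "2 * card {i. i < m \<and> g i = c} \<le> m"
proof -
  let ?S = "{i. i < m \<and> g i = c}"
  define f where "f i = Suc i mod m" for i
  have inj: "inj_on f ?S"
  proof (rule inj_onI)
    fix x y assume "x \<in> ?S" "y \<in> ?S" "f x = f y"
    then have "x < m" "y < m" "Suc x mod m = Suc y mod m" by (auto simp: f_def)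
    then show "x = y"
      by (metis Suc_lessI mod_Suc mod_less nat.inject nat.simps(3))
  qed
  have disj: "?S \<inter> f ` ?S = {}"
  proof (rule ccontr)
    assume "?S \<inter> f ` ?S \<noteq> {}"
    then obtain i where "i \<in> ?S" "f i \<in> ?S" by blast
    then show False using assms(2) by (auto simp: f_def)
  qed
  have sub: "?S \<union> f ` ?S \<subseteq> {..<m}" using assms(1) by (auto simp: f_def)
  have "card (?S \<union> f ` ?S) = card ?S + card (f ` ?S)"
    by (rule card_Un_disjoint) (use disj in auto)
  also have "card (f ` ?S) = card ?S" using card_image[OF inj] .
  finally have "card (?S \<union> f ` ?S) = 2 * card ?S" by simp
  moreover have "card (?S \<union> f ` ?S) \<le> m" using card_mono[OF _ sub] by simp
  ultimately show ?thesis by simp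
qed

lemma cyc_split:
  fixes g :: "nat \<Rightarrow> nat"
  assumes "0 < m" "\<forall>i<m. g i \<noteq> g (Suc i mod m)"
    and "card {i. i < m \<and> g i \<notin> {0,1}} + 2 * k = m" and "m \<le> 2 * k + 1"
  shows "card {i. i < m \<and> g i = 0} = k \<and> card {i. i < m \<and> g i = 1} = k"
proof -
  let ?S0 = "{i. i < m \<and> g i = 0}" and ?S1 = "{i. i < m \<and> g i = 1}"
    and ?D = "{i. i < m \<and> g i \<notin> {0,1}}"
  have f0: "finite ?S0" "finite ?S1" "finite ?D" by auto
  have e: "{..<m} = (?S0 \<union> ?S1) \<union> ?D" by auto
  have c1: "card (?S0 \<union> ?S1) = card ?S0 + card ?S1"
    using f0 by (intro card_Un_disjoint) auto
  have c2: "card ((?S0 \<union> ?S1) \<union> ?D) = card (?S0 \<union> ?S1) + card ?D"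
    using f0 by (intro card_Un_disjoint) auto
  have "card ?S0 + card ?S1 + card ?D = m"
    using c1 c2 e card_lessThan[of m] by simp
  moreover have "2 * card ?S0 \<le> m" "2 * card ?S1 \<le> m" using cyc_bound[OF assms(1,2)] by blast+
  ultimately show ?thesis using assms(3,4) by linarith
qed

lemma cnt_split:
  "card {v \<in> SV m n. f v = c} = card {i. i < m \<and> f i = c} + card {l. m \<le> l \<and> l < m + n \<and> f l = c}"
proof -
  have "{v \<in> SV m n. f v = c} = {i. i < m \<and> f i = c} \<union> {l. m \<le> l \<and> l < m + n \<and> f l = c}"
    by (auto simp: squid_vertices_def)
  moreover have "card ({i. i < m \<and> f i = c} \<union> {l. m \<le> l \<and> l < m + n \<and> f l = c})
     = card {i. i < m \<and> f i = c} + card {l. m \<le> l \<and> l < m + n \<and> f l = c}"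
    by (rule card_Un_disjoint) auto
  ultimately show ?thesis by simp
qed

lemma cnt_restrict: "{v \<in> SV m n. restrict f (SV m n) v = c} = {v \<in> SV m n. f v = c}"
  by auto

lemma finite_CS:
  assumes "\<forall>x\<ge>3. \<gamma> x = 0"
  shows "finite {\<kappa>. proper_coloring (SV m n) (SE m n) \<kappa> \<and> (\<forall>i. card {v\<in>SV m n. \<kappa> v = i} = \<gamma> i)}"
proof (rule finite_subset)
  show "finite (PiE (SV m n) (\<lambda>_. {..<3::nat}))" by (intro finite_PiE) (auto simp: squid_vertices_def)
  show "{\<kappa>. proper_coloring (SV m n) (SE m n) \<kappa> \<and> (\<forall>i. card {v\<in>SV m n. \<kappa> v = i} = \<gamma> i)}
     \<subseteq> PiE (SV m n) (\<lambda>_. {..<3})"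
  proof
    fix \<kappa> assume k: "\<kappa> \<in> {\<kappa>. proper_coloring (SV m n) (SE m n) \<kappa> \<and> (\<forall>i. card {v\<in>SV m n. \<kappa> v = i} = \<gamma> i)}"
    have "\<kappa> v < 3" if "v \<in> SV m n" for v
    proof -
      have "0 < \<gamma> (\<kappa> v)" using card_pos_of_mem[of "SV m n" \<kappa> \<gamma> v] k that
        by (simp add: squid_vertices_def)
      then show ?thesis using assms by (metis not_less less_irrefl)
    qed
    moreover have "\<kappa> \<in> extensional (SV m n)" using k by (simp add: proper_coloring_def)
    ultimately show "\<kappa> \<in> PiE (SV m n) (\<lambda>_. {..<3})" by (auto simp: PiE_def Pi_def)
  qed
qed



lemma par1: "Suc i mod 2 \<noteq> i mod 2" "i mod 2 \<noteq> Suc i mod 2" by presburger+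

lemma CS_mem_pos:
  assumes "proper_coloring (SV m n) (SE m n) \<kappa> \<and> (\<forall>i. card {v\<in>SV m n. \<kappa> v = i} = \<gamma> i)" "v \<in> SV m n"
  shows "0 < \<gamma> (\<kappa> v)"
  using card_pos_of_mem[of "SV m n" \<kappa> \<gamma> v] assms by (simp add: squid_vertices_def)

lemma csf_pos:
  assumes "\<forall>x\<ge>3. \<gamma> x = 0" "proper_coloring (SV m n) (SE m n) \<kappa>" "\<forall>i. card {v\<in>SV m n. \<kappa> v = i} = \<gamma> i"
  shows "0 < csf_coeff (SV m n) (SE m n) \<gamma>"
proof -
  let ?S = "{\<kappa>. proper_coloring (SV m n) (SE m n) \<kappa> \<and> (\<forall>i. card {v\<in>SV m n. \<kappa> v = i} = \<gamma> i)}"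
  have "\<kappa> \<in> ?S" using assms(2,3) by simp
  then have ne: "?S \<noteq> {}" by blast
  have fin: "finite ?S" using finite_CS[OF assms(1), of m n] .
  have "0 < card ?S" using card_gt_0_iff[of ?S] ne fin by blast
  then show ?thesis unfolding csf_coeff_def .
qed

lemma caseA:
  assumes m: "m = 2 * k" and k: "2 \<le> k" and n: "2 \<le> n"
  shows "\<not> schur_positive (SV m n) (SE m n)"
proof -
  define \<alpha> :: "nat \<Rightarrow> nat" where "\<alpha> x = (if x = 0 then k + n else if x = 1 then k else 0)" for x
  have a0: "\<alpha> 0 = Suc (k + n - 1)" using n by (simp add: \<alpha>_def)
  have a1: "\<alpha> 1 \<le> k + n - 1" using n by (simp add: \<alpha>_def)
  have a3: "\<forall>x\<ge>3. \<alpha> x = 0" by (simp add: \<alpha>_def)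
  let ?\<beta> = "\<alpha>(0 := k + n - 1, 1 := Suc (\<alpha> 1))"
  have m0: "0 < m" using m k by simp
  define f :: "nat \<Rightarrow> nat" where "f v = (if v < m then (v + 1) mod 2 else 0)" for v
  have fcyc: "\<forall>i<m. f i \<noteq> f (Suc i mod m)"
  proof (intro allI impI)
    fix i assume i: "i < m"
    show "f i \<noteq> f (Suc i mod m)"
    proof (cases "Suc i < m")
      case True then show ?thesis using i by (simp add: f_def par1)
    next
      case False
      then have "Suc i = m" using i by simp
      then show ?thesis using i m m0 by (auto simp: f_def)
    qed
  qed
  have fleaf: "\<forall>l. m \<le> l \<and> l < m + n \<longrightarrow> f l \<noteq> f 0" using m0 by (simp add: f_def)
  have pr: "proper_coloring (SV m n) (SE m n) (restrict f (SV m n))"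
    using proper_restrict[OF m0 fcyc fleaf] .
  have D0: "card {i. i < m \<and> f i \<notin> {0,1}} = 0"
  proof -
    have "{i. i < m \<and> f i \<notin> {0,1}} = {}" by (auto simp: f_def)
    then show ?thesis by simp
  qed
  have cyc01: "card {i. i < m \<and> f i = 0} = k \<and> card {i. i < m \<and> f i = 1} = k"
    using cyc_split[OF m0 fcyc, of k] D0 m by simp
  have cyc2: "card {i. i < m \<and> f i = x} = 0" if "x \<ge> 2" for x
  proof -
    have "{i. i < m \<and> f i = x} = {}" using that by (auto simp: f_def)
    then show ?thesis by simp
  qed
  have leaf: "{l. m \<le> l \<and> l < m + n \<and> f l = x} = (if x = 0 then {m..<m+n} else {})" for x
    by (auto simp: f_def)
  have cnt: "card {v\<in>SV m n. restrict f (SV m n) v = x} = \<alpha> x" for x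
  proof -
    have sp: "card {v\<in>SV m n. restrict f (SV m n) v = x} = card {i. i < m \<and> f i = x} + card {l. m \<le> l \<and> l < m + n \<and> f l = x}"
      using cnt_split[of m n f x] cnt_restrict[of m n f x] by simp
    consider "x = 0" | "x = 1" | "x \<ge> 2" by linarith
    then show ?thesis
    proof cases
      case 1 then show ?thesis using sp cyc01 leaf by (simp add: \<alpha>_def)
    next
      case 2 then show ?thesis using sp cyc01 leaf by (simp add: \<alpha>_def)
    next
      case 3 then show ?thesis using sp cyc2[OF 3] leaf by (simp add: \<alpha>_def)
    qed
  qed
  have pos: "0 < csf_coeff (SV m n) (SE m n) \<alpha>"
    using csf_pos[OF a3 pr] cnt by blast
  have empty: False if kp: "proper_coloring (SV m n) (SE m n) \<kappa>" and kc: "\<forall>i. card {v\<in>SV m n. \<kappa> v = i} = ?\<beta> i" for \<kappa>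
  proof -
    have v01: "\<kappa> v \<in> {0,1}" if "v \<in> SV m n" for v
    proof -
      have "0 < ?\<beta> (\<kappa> v)" using CS_mem_pos[of m n \<kappa> ?\<beta> v] kp kc that by blast
      then show ?thesis by (auto simp: \<alpha>_def split: if_splits)
    qed
    have kcyc: "\<forall>i<m. \<kappa> i \<noteq> \<kappa> (Suc i mod m)" using proper_cycle[OF kp] by blast
    have "{i. i < m \<and> \<kappa> i \<notin> {0,1}} = {}" using v01 by (auto simp: squid_vertices_def)
    then have c1: "card {i. i < m \<and> \<kappa> i = 1} = k"
      using cyc_split[OF m0 kcyc, of k] m by simp
    have "card {v\<in>SV m n. \<kappa> v = 1} = Suc k" using kc by (simp add: \<alpha>_def)
    then have L1: "card {l. m \<le> l \<and> l < m + n \<and> \<kappa> l = 1} = 1"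
      using cnt_split[of m n \<kappa> 1] c1 by simp
    have lv: "\<kappa> l \<in> {0,1}" "\<kappa> l \<noteq> \<kappa> 0" if "m \<le> l" "l < m + n" for l
      using v01 proper_leaf[OF kp that m0] that by (auto simp: squid_vertices_def)
    have k0: "\<kappa> 0 \<in> {0,1}" using v01 m0 by (simp add: squid_vertices_def)
    show False
    proof (cases "\<kappa> 0 = 1")
      case True
      have "{l. m \<le> l \<and> l < m + n \<and> \<kappa> l = 1} = {}" using lv True by auto
      then have "card {l. m \<le> l \<and> l < m + n \<and> \<kappa> l = 1} = 0" by (simp only: card.empty)
      with L1 show False by linarith
    next
      case False
      then have "\<kappa> 0 = 0" using k0 by simp
      then have "\<kappa> l = 1" if "m \<le> l" "l < m + n" for l using lv[OF that] by auto
      then have "{l. m \<le> l \<and> l < m + n \<and> \<kappa> l = 1} = {m..<m+n}" by auto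
      then have "card {l. m \<le> l \<and> l < m + n \<and> \<kappa> l = 1} = n" by (simp only: card_atLeastLessThan diff_add_inverse)
      with L1 n show False by linarith
    qed
  qed
  have "{\<kappa>. proper_coloring (SV m n) (SE m n) \<kappa> \<and> (\<forall>i. card {v\<in>SV m n. \<kappa> v = i} = ?\<beta> i)} = {}"
    using empty by blast
  then have "csf_coeff (SV m n) (SE m n) ?\<beta> = 0"
    unfolding csf_coeff_def by (simp only: card.empty)
  then have lt: "csf_coeff (SV m n) (SE m n) ?\<beta> < csf_coeff (SV m n) (SE m n) \<alpha>" using pos by simp
  show ?thesis by (rule not_sp_from[OF lt a0 a1 a3])
qed



lemma caseB:
  assumes m: "m = 2 * k + 1" and k: "1 \<le> k" and n: "k + 2 \<le> n"
  shows "\<not> schur_positive (SV m n) (SE m n)"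
proof -
  define \<alpha> :: "nat \<Rightarrow> nat" where
    "\<alpha> x = (if x = 0 then n else if x = 1 then k else if x = 2 then Suc k else 0)" for x
  have a0: "\<alpha> 0 = Suc (n - 1)" using n by (simp add: \<alpha>_def)
  have a1: "\<alpha> 1 \<le> n - 1" using n by (simp add: \<alpha>_def)
  have a3: "\<forall>x\<ge>3. \<alpha> x = 0" by (simp add: \<alpha>_def)
  let ?\<beta> = "\<alpha>(0 := n - 1, 1 := Suc (\<alpha> 1))"
  have m0: "0 < m" using m by simp
  define f :: "nat \<Rightarrow> nat" where
    "f v = (if v < m - 1 then (v + 1) mod 2 else if v < m + k then 2 else 0)" for v
  have fcyc: "\<forall>i<m. f i \<noteq> f (Suc i mod m)"
  proof (intro allI impI)
    fix i assume i: "i < m"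
    consider "Suc i < m - 1" | "Suc i = m - 1" | "Suc i = m" using i by linarith
    then show "f i \<noteq> f (Suc i mod m)"
    proof cases
      case 1 then show ?thesis using i by (simp add: f_def par1)
    next
      case 2
      then have "Suc i mod m = m - 1" using m by simp
      then show ?thesis using 2 m by (simp add: f_def)
    next
      case 3
      then have "Suc i mod m = 0" by simp
      then show ?thesis using 3 m k by (simp add: f_def)
    qed
  qed
  have fleaf: "\<forall>l. m \<le> l \<and> l < m + n \<longrightarrow> f l \<noteq> f 0" using m k by (simp add: f_def)
  have pr: "proper_coloring (SV m n) (SE m n) (restrict f (SV m n))"
    using proper_restrict[OF m0 fcyc fleaf] .
  have Deq: "{i. i < m \<and> f i \<notin> {0,1}} = {m - 1}"
  proof -
    have "f i \<in> {0,1}" if "i < m - 1" for i using that by (simp add: f_def; presburger)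
    moreover have "f (m - 1) = 2" using m by (simp add: f_def)
    ultimately show ?thesis
    proof (intro equalityI subsetI)
      fix i assume "i \<in> {i. i < m \<and> f i \<notin> {0,1}}"
      then have "i < m" "f i \<notin> {0,1}" by auto
      then have "\<not> i < m - 1" using \<open>\<And>i. i < m - 1 \<Longrightarrow> f i \<in> {0,1}\<close> by blast
      then show "i \<in> {m - 1}" using \<open>i < m\<close> by simp
    next
      fix i assume "i \<in> {m - 1}"
      then show "i \<in> {i. i < m \<and> f i \<notin> {0,1}}" using \<open>f (m - 1) = 2\<close> m0 by simp
    qed
  qed
  have cyc01: "card {i. i < m \<and> f i = 0} = k \<and> card {i. i < m \<and> f i = 1} = k"
    using cyc_split[OF m0 fcyc, of k] Deq m by simp
  have cyc2: "{i. i < m \<and> f i = 2} = {m - 1}"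
  proof -
    have "{i. i < m \<and> f i = 2} \<subseteq> {i. i < m \<and> f i \<notin> {0,1}}" by auto
    moreover have "m - 1 \<in> {i. i < m \<and> f i = 2}" using m by (simp add: f_def)
    ultimately show ?thesis using Deq by blast
  qed
  have cyc3: "{i. i < m \<and> f i = x} = {}" if "x \<ge> 3" for x
    using that by (auto simp: f_def)
  have leaf: "{l. m \<le> l \<and> l < m + n \<and> f l = x} =
      (if x = 2 then {m..<m+k} else if x = 0 then {m+k..<m+n} else {})" for x
    using m n by (auto simp: f_def)
  have cnt: "card {v\<in>SV m n. restrict f (SV m n) v = x} = \<alpha> x" for x
  proof -
    have sp: "card {v\<in>SV m n. restrict f (SV m n) v = x} = card {i. i < m \<and> f i = x} + card {l. m \<le> l \<and> l < m + n \<and> f l = x}"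
      using cnt_split[of m n f x] cnt_restrict[of m n f x] by simp
    consider "x = 0" | "x = 1" | "x = 2" | "x \<ge> 3" by linarith
    then show ?thesis
    proof cases
      case 1 then show ?thesis using sp cyc01 leaf n by (simp add: \<alpha>_def)
    next
      case 2 then show ?thesis using sp cyc01 leaf by (simp add: \<alpha>_def)
    next
      case 3 then show ?thesis using sp cyc2 leaf by (simp add: \<alpha>_def)
    next
      case 4 then show ?thesis using sp cyc3[OF 4] leaf by (simp add: \<alpha>_def)
    qed
  qed
  have pos: "0 < csf_coeff (SV m n) (SE m n) \<alpha>"
    using csf_pos[OF a3 pr] cnt by blast
  have empty: False if kp: "proper_coloring (SV m n) (SE m n) \<kappa>" and kc: "\<forall>i. card {v\<in>SV m n. \<kappa> v = i} = ?\<beta> i" for \<kappa>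
  proof -
    have v012: "\<kappa> v < 3" if "v \<in> SV m n" for v
    proof -
      have "0 < ?\<beta> (\<kappa> v)" using CS_mem_pos[of m n \<kappa> ?\<beta> v] kp kc that by blast
      then show ?thesis by (auto simp: \<alpha>_def split: if_splits)
    qed
    have kcyc: "\<forall>i<m. \<kappa> i \<noteq> \<kappa> (Suc i mod m)" using proper_cycle[OF kp] by blast
    have cb: "card {i. i < m \<and> \<kappa> i = c} \<le> k" for c
      using cyc_bound[OF m0 kcyc, of c] m by simp
    have lv: "\<kappa> l \<noteq> \<kappa> 0" if "m \<le> l" "l < m + n" for l
      using proper_leaf[OF kp that m0] .
    have has_leaf: "\<exists>l. m \<le> l \<and> l < m + n \<and> \<kappa> l = c" if c: "c = 1 \<or> c = 2" for c
    proof (rule ccontr)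
      assume "\<not> ?thesis"
      then have "{l. m \<le> l \<and> l < m + n \<and> \<kappa> l = c} = {}" by blast
      then have "card {v\<in>SV m n. \<kappa> v = c} = card {i. i < m \<and> \<kappa> i = c}"
        using cnt_split[of m n \<kappa> c] by simp
      moreover have "card {v\<in>SV m n. \<kappa> v = c} = Suc k" using kc c by (auto simp: \<alpha>_def)
      ultimately show False using cb[of c] by simp
    qed
    have "\<kappa> 0 \<noteq> 1" using has_leaf[of 1] lv by metis
    moreover have "\<kappa> 0 \<noteq> 2" using has_leaf[of 2] lv by metis
    moreover have "\<kappa> 0 < 3" using v012 m0 by (simp add: squid_vertices_def)
    ultimately have k00: "\<kappa> 0 = 0" by linarith
    have "{l. m \<le> l \<and> l < m + n \<and> \<kappa> l = 0} = {}" using lv k00 by auto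
    then have "card {v\<in>SV m n. \<kappa> v = 0} = card {i. i < m \<and> \<kappa> i = 0}"
      using cnt_split[of m n \<kappa> 0] by simp
    moreover have "card {v\<in>SV m n. \<kappa> v = 0} = n - 1" using kc by (simp add: \<alpha>_def)
    ultimately show False using cb[of 0] n by simp
  qed
  have "{\<kappa>. proper_coloring (SV m n) (SE m n) \<kappa> \<and> (\<forall>i. card {v\<in>SV m n. \<kappa> v = i} = ?\<beta> i)} = {}"
    using empty by blast
  then have "csf_coeff (SV m n) (SE m n) ?\<beta> = 0"
    unfolding csf_coeff_def by (simp only: card.empty)
  then have lt: "csf_coeff (SV m n) (SE m n) ?\<beta> < csf_coeff (SV m n) (SE m n) \<alpha>" using pos by simp
  show ?thesis by (rule not_sp_from[OF lt a0 a1 a3])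
qed



lemma caseC_lower:
  assumes m: "m = 2 * k + 1" and k: "1 \<le> k" and n: "1 \<le> n"
  defines "\<alpha> \<equiv> (\<lambda>x::nat. if x = 0 then k + n else if x = 1 then k else if x = 2 then 1 else (0::nat))"
  shows "m + 1 \<le> csf_coeff (SV m n) (SE m n) \<alpha>"
proof -
  have a3: "\<forall>x\<ge>3. \<alpha> x = 0" by (simp add: \<alpha>_def)
  have m0: "0 < m" using m by simp
  define p :: "nat \<Rightarrow> nat" where "p t = (if t < 2 then 0 else t - 1)" for t
  define g :: "nat \<Rightarrow> nat \<Rightarrow> nat" where
    "g t v = (if t < 2 then (if v = 0 then 2 else if v < m then (v + t) mod 2 else 0)
       else if v = t - 1 then 2 else if v < t - 1 then (v + 1) mod 2 else if v < m then v mod 2 else 0)" for t v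
  have g01: "g t v \<in> {0,1}" if "v \<noteq> p t" for t v
    using that unfolding g_def p_def by (auto; presburger)
  have gp: "g t (p t) = 2" for t unfolding g_def p_def by auto
  have pm: "p t < m" if "t < m + 1" for t using that m unfolding p_def by auto
  have gleaf: "g t l = 0" if "t < m + 1" "m \<le> l" for t l using that m0 unfolding g_def by auto
  have g0: "g t 0 = (if t < 2 then 2 else 1)" if "t < m + 1" for t using that unfolding g_def by auto
  have gcyc: "\<forall>i<m. g t i \<noteq> g t (Suc i mod m)" if t: "t < m + 1" for t
  proof (intro allI impI)
    fix i assume i: "i < m"
    show "g t i \<noteq> g t (Suc i mod m)"
    proof (cases "Suc i < m")
      case True
      then have e: "Suc i mod m = Suc i" by simp
      show ?thesis
      proof (cases "i = p t \<or> Suc i = p t")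
        case True
        then show ?thesis
        proof
          assume a: "i = p t"
          then have "Suc i \<noteq> p t" by simp
          then have "g t (Suc i) \<in> {0,1}" using g01 by blast
          then show ?thesis using a gp e by auto
        next
          assume a: "Suc i = p t"
          then have "i \<noteq> p t" by simp
          then have "g t i \<in> {0,1}" using g01 by blast
          then show ?thesis using a gp e by auto
        qed
      next
        case False
        then show ?thesis using e True unfolding g_def p_def by (auto simp: par1)
      qed
    next
      case False
      then have sm: "Suc i = m" using i by simp
      then have i': "i = 2 * k" using m by simp
      have e: "Suc i mod m = 0" using sm by simp
      show ?thesis
      proof (cases "t < 2")
        case True
        then have "p t = 0" by (simp add: p_def)
        then have "i \<noteq> p t" using i' k by simp
        then have "g t i \<in> {0,1}" using g01 by blast
        then show ?thesis using e g0[OF t] True by auto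
      next
        case False
        then have g0': "g t 0 = 1" using g0[OF t] by simp
        show ?thesis
        proof (cases "i = p t")
          case True then show ?thesis using gp e g0' by simp
        next
          case ne: False
          have "t - 1 < i" using ne False t sm unfolding p_def by auto
          then have "g t i = i mod 2" using False i unfolding g_def by auto
          then show ?thesis using e g0' i' by simp
        qed
      qed
    qed
  qed
  have gl: "\<forall>l. m \<le> l \<and> l < m + n \<longrightarrow> g t l \<noteq> g t 0" if t: "t < m + 1" for t
    using gleaf[OF t] g0[OF t] by simp
  define F where "F t = restrict (g t) (SV m n)" for t
  let ?S = "{\<kappa>. proper_coloring (SV m n) (SE m n) \<kappa> \<and> (\<forall>i. card {v\<in>SV m n. \<kappa> v = i} = \<alpha> i)}"
  have FS: "F t \<in> ?S" if t: "t < m + 1" for t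
  proof -
    have pr: "proper_coloring (SV m n) (SE m n) (F t)"
      unfolding F_def using proper_restrict[OF m0 gcyc[OF t] gl[OF t]] .
    have Deq: "{i. i < m \<and> g t i \<notin> {0,1}} = {p t}"
    proof (intro equalityI subsetI)
      fix i assume "i \<in> {i. i < m \<and> g t i \<notin> {0,1}}"
      then show "i \<in> {p t}" using g01[of i t] by auto
    next
      fix i assume "i \<in> {p t}" then show "i \<in> {i. i < m \<and> g t i \<notin> {0,1}}" using gp pm[OF t] by simp
    qed
    have cyc01: "card {i. i < m \<and> g t i = 0} = k \<and> card {i. i < m \<and> g t i = 1} = k"
      using cyc_split[OF m0 gcyc[OF t], of k] Deq m by simp
    have cyc2: "{i. i < m \<and> g t i = 2} = {p t}"
    proof (intro equalityI subsetI)
      fix i assume "i \<in> {i. i < m \<and> g t i = 2}"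
      then show "i \<in> {p t}" using g01[of i t] by auto
    next
      fix i assume "i \<in> {p t}" then show "i \<in> {i. i < m \<and> g t i = 2}" using gp pm[OF t] by simp
    qed
    have cyc3: "{i. i < m \<and> g t i = x} = {}" if x3: "x \<ge> 3" for x
    proof -
      have "g t i \<noteq> x" for i
      proof (cases "i = p t")
        case True then show ?thesis using gp x3 by simp
      next
        case False then show ?thesis using g01[of i t] x3 by auto
      qed
      then show ?thesis by auto
    qed
    have leaf: "{l. m \<le> l \<and> l < m + n \<and> g t l = x} = (if x = 0 then {m..<m+n} else {})" for x
      using gleaf[OF t] by auto
    have cnt: "card {v\<in>SV m n. F t v = x} = \<alpha> x" for x
    proof -
      have sp: "card {v\<in>SV m n. F t v = x} = card {i. i < m \<and> g t i = x} + card {l. m \<le> l \<and> l < m + n \<and> g t l = x}"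
        using cnt_split[of m n "g t" x] cnt_restrict[of m n "g t" x] unfolding F_def by simp
      consider "x = 0" | "x = 1" | "x = 2" | "x \<ge> 3" by linarith
      then show ?thesis
      proof cases
        case 1 then show ?thesis using sp cyc01 leaf by (simp add: \<alpha>_def)
      next
        case 2 then show ?thesis using sp cyc01 leaf by (simp add: \<alpha>_def)
      next
        case 3 then show ?thesis using sp cyc2 leaf by (simp add: \<alpha>_def)
      next
        case 4 then show ?thesis using sp cyc3[OF 4] leaf by (simp add: \<alpha>_def)
      qed
    qed
    show ?thesis using pr cnt by simp
  qed
  have Fp: "F t v = 2 \<longleftrightarrow> v = p t" if t: "t < m + 1" and v: "v \<in> SV m n" for t v
  proof -
    have "p t \<in> SV m n" using pm[OF t] by (simp add: squid_vertices_def)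
    then show ?thesis using v gp g01[of v t] unfolding F_def by (cases "v = p t") auto
  qed
  have inj: "inj_on F {..<m+1}"
  proof (rule inj_onI)
    fix t1 t2 assume t1: "t1 \<in> {..<m+1}" and t2: "t2 \<in> {..<m+1}" and e: "F t1 = F t2"
    have "p t1 < m" using pm t1 by simp
    then have pv: "p t1 \<in> SV m n" by (simp add: squid_vertices_def)
    have pe: "p t1 = p t2" using Fp[of t1 "p t1"] Fp[of t2 "p t1"] t1 t2 pv e by auto
    show "t1 = t2"
    proof (cases "t1 < 2 \<and> t2 < 2")
      case True
      have "1 \<in> SV m n" using m k by (simp add: squid_vertices_def)
      then have "g t1 1 = g t2 1" using e unfolding F_def by (metis restrict_apply')
      moreover have "1 < m" using m k by simp
      ultimately show ?thesis using True unfolding g_def by simp presburger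
    next
      case False
      then show ?thesis using pe unfolding p_def by (auto split: if_splits)
    qed
  qed
  have "F ` {..<m+1} \<subseteq> ?S" using FS by auto
  moreover have "finite ?S" using finite_CS[OF a3] .
  ultimately have "card (F ` {..<m+1}) \<le> card ?S" by (rule card_mono[rotated])
  moreover have "card (F ` {..<m+1}) = m + 1" using card_image[OF inj] by simp
  ultimately show ?thesis unfolding csf_coeff_def by simp
qed

lemma caseC_upper:
  assumes m: "m = 2 * k + 1" and k: "1 \<le> k" and n: "2 \<le> n" and nk: "n \<le> k"
  defines "\<beta> \<equiv> (\<lambda>x::nat. if x = 0 then k + n - 1 else if x = 1 then Suc k else if x = 2 then 1 else (0::nat))"
  shows "csf_coeff (SV m n) (SE m n) \<beta> \<le> 2 * n"
proof -
  have m0: "0 < m" using m by simp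
  define G where "G bl = restrict (\<lambda>v. if v = 0 then 2 else if v < m then (v + fst bl) mod 2
      else if v = snd bl then 1 else (0::nat)) (SV m n)" for bl :: "nat \<times> nat"
  let ?X = "{..<2::nat} \<times> {m..<m+n}"
  let ?S = "{\<kappa>. proper_coloring (SV m n) (SE m n) \<kappa> \<and> (\<forall>i. card {v\<in>SV m n. \<kappa> v = i} = \<beta> i)}"
  have sub: "?S \<subseteq> G ` ?X"
  proof
    fix \<kappa> assume "\<kappa> \<in> ?S"
    then have kp: "proper_coloring (SV m n) (SE m n) \<kappa>" and kc: "\<forall>i. card {v\<in>SV m n. \<kappa> v = i} = \<beta> i"
      by auto
    have v3: "\<kappa> v < 3" if "v \<in> SV m n" for v
    proof -
      have "0 < \<beta> (\<kappa> v)" using CS_mem_pos[of m n \<kappa> \<beta> v] kp kc that by blast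
      then show ?thesis by (auto simp: \<beta>_def split: if_splits)
    qed
    have kcyc: "\<forall>i<m. \<kappa> i \<noteq> \<kappa> (Suc i mod m)" using proper_cycle[OF kp] by blast
    have cb: "card {i. i < m \<and> \<kappa> i = c} \<le> k" for c
      using cyc_bound[OF m0 kcyc, of c] m by simp
    have lv: "\<kappa> l \<noteq> \<kappa> 0" if "m \<le> l" "l < m + n" for l
      using proper_leaf[OF kp that m0] .
    have noleaf: "card {v\<in>SV m n. \<kappa> v = c} \<le> k" if "c = \<kappa> 0" for c
    proof -
      have "{l. m \<le> l \<and> l < m + n \<and> \<kappa> l = c} = {}" using lv that by auto
      then have "card {v\<in>SV m n. \<kappa> v = c} = card {i. i < m \<and> \<kappa> i = c}"
        using cnt_split[of m n \<kappa> c] by simp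
      then show ?thesis using cb[of c] by simp
    qed
    have "\<kappa> 0 \<noteq> 0"
    proof
      assume "\<kappa> 0 = 0"
      then have "card {v\<in>SV m n. \<kappa> v = 0} \<le> k" using noleaf by simp
      moreover have "card {v\<in>SV m n. \<kappa> v = 0} = k + n - 1" using kc by (simp add: \<beta>_def)
      ultimately show False using n by simp
    qed
    moreover have "\<kappa> 0 \<noteq> 1"
    proof
      assume "\<kappa> 0 = 1"
      then have "card {v\<in>SV m n. \<kappa> v = 1} \<le> k" using noleaf by simp
      moreover have "card {v\<in>SV m n. \<kappa> v = 1} = Suc k" using kc by (simp add: \<beta>_def)
      ultimately show False by simp
    qed
    moreover have "\<kappa> 0 < 3" using v3 m0 by (simp add: squid_vertices_def)
    ultimately have k02: "\<kappa> 0 = 2" by linarith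
    have z: "0 \<in> SV m n" using m0 by (simp add: squid_vertices_def)
    have s2: "{v\<in>SV m n. \<kappa> v = 2} = {0}"
    proof -
      have "card {v\<in>SV m n. \<kappa> v = 2} = 1" using kc by (simp add: \<beta>_def)
      then obtain w where w: "{v\<in>SV m n. \<kappa> v = 2} = {w}" by (rule card_1_singletonE)
      moreover have "0 \<in> {v\<in>SV m n. \<kappa> v = 2}" using z k02 by simp
      ultimately have "0 \<in> {w}" by simp
      then have "w = 0" by simp
      then show ?thesis using w by simp
    qed
    have v01: "\<kappa> v \<in> {0,1}" if "v \<in> SV m n" "v \<noteq> 0" for v
    proof -
      have "\<kappa> v \<noteq> 2"
      proof
        assume "\<kappa> v = 2"
        then have "v \<in> {v\<in>SV m n. \<kappa> v = 2}" using that(1) by simp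
        then have "v \<in> {0}" by (simp only: s2)
        then show False using that(2) by simp
      qed
      then have "\<kappa> v = 0 \<or> \<kappa> v = 1" using v3[OF that(1)] by linarith
      then show ?thesis by simp
    qed
    define b where "b = (\<kappa> 1 + 1) mod 2"
    have b2: "b < 2" by (simp add: b_def)
    have alt: "\<kappa> i = (i + b) mod 2" if "1 \<le> i" "i < m" for i
      using that
    proof (induction i)
      case 0 then show ?case by simp
    next
      case (Suc i)
      show ?case
      proof (cases "i = 0")
        case True
        have "\<kappa> 1 \<in> {0,1}" using v01[of 1] m k by (simp add: squid_vertices_def)
        then have "\<kappa> 1 = 0 \<or> \<kappa> 1 = 1" by simp
        then show ?thesis using True by (elim disjE) (simp_all add: b_def)
      next
        case False
        then have ih: "\<kappa> i = (i + b) mod 2" using Suc by simp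
        have si: "Suc i < m" using Suc.prems by simp
        then have "Suc i mod m = Suc i" by simp
        then have "\<kappa> i \<noteq> \<kappa> (Suc i)" using kcyc si by (metis Suc_lessD)
        moreover have "\<kappa> (Suc i) \<in> {0,1}" using v01[of "Suc i"] si by (simp add: squid_vertices_def)
        moreover have "(i + b) mod 2 = 0 \<and> (Suc i + b) mod 2 = 1 \<or> (i + b) mod 2 = 1 \<and> (Suc i + b) mod 2 = 0"
          by presburger
        ultimately show ?thesis using ih by auto
      qed
    qed
    have D: "card {i. i < m \<and> \<kappa> i \<notin> {0,1}} = 1"
    proof -
      have "{i. i < m \<and> \<kappa> i \<notin> {0,1}} = {0}"
      proof (intro equalityI subsetI)
        fix i assume i: "i \<in> {i. i < m \<and> \<kappa> i \<notin> {0,1}}"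
        show "i \<in> {0}"
        proof (rule ccontr)
          assume "i \<notin> {0}"
          then have "\<kappa> i \<in> {0,1}" using v01[of i] i by (simp add: squid_vertices_def)
          then show False using i by simp
        qed
      next
        fix i assume "i \<in> {0::nat}" then show "i \<in> {i. i < m \<and> \<kappa> i \<notin> {0,1}}" using k02 m0 by simp
      qed
      then show ?thesis by simp
    qed
    have c1: "card {i. i < m \<and> \<kappa> i = 1} = k"
      using cyc_split[OF m0 kcyc, of k] D m by simp
    have "card {v\<in>SV m n. \<kappa> v = 1} = Suc k" using kc by (simp add: \<beta>_def)
    then have "card {l. m \<le> l \<and> l < m + n \<and> \<kappa> l = 1} = 1"
      using cnt_split[of m n \<kappa> 1] c1 by simp
    then obtain l where l: "{l. m \<le> l \<and> l < m + n \<and> \<kappa> l = 1} = {l}" by (rule card_1_singletonE)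
    have lX: "m \<le> l" "l < m + n" "\<kappa> l = 1" using l by auto
    have ext: "\<kappa> \<in> extensional (SV m n)" using kp by (simp add: proper_coloring_def)
    have "\<kappa> = G (b, l)"
    proof
      fix v
      show "\<kappa> v = G (b, l) v"
      proof (cases "v \<in> SV m n")
        case False then show ?thesis using ext unfolding G_def by (simp add: extensional_def)
      next
        case True
        consider "v = 0" | "0 < v \<and> v < m" | "m \<le> v \<and> v = l" | "m \<le> v \<and> v \<noteq> l" by linarith
        then show ?thesis
        proof cases
          case 1 then show ?thesis using True k02 unfolding G_def by simp
        next
          case 2 then show ?thesis using True alt[of v] unfolding G_def by simp
        next
          case 3 then show ?thesis using True lX m0 unfolding G_def by simp
        next
          case 4
          then have "v \<notin> {l}" by simp
          then have "\<kappa> v \<noteq> 1" using l 4 True by (auto simp: squid_vertices_def)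
          moreover have "\<kappa> v \<in> {0,1}" using v01[OF True] 4 m0 by simp
          ultimately show ?thesis using True 4 m0 unfolding G_def by auto
        qed
      qed
    qed
    moreover have "(b, l) \<in> ?X" using b2 lX by simp
    ultimately show "\<kappa> \<in> G ` ?X" by blast
  qed
  have finG: "finite (G ` ?X)" by simp
  have "card ?S \<le> card (G ` ?X)" using card_mono[OF finG sub] .
  also have "\<dots> \<le> card ?X" by (rule card_image_le) simp
  also have "card ?X = 2 * n" by (simp add: card_cartesian_product)
  finally show ?thesis unfolding csf_coeff_def .
qed

lemma caseC:
  assumes m: "m = 2 * k + 1" and n: "2 \<le> n" and nk: "n \<le> k"
  shows "\<not> schur_positive (SV m n) (SE m n)"
proof -
  have k: "1 \<le> k" using n nk by simp
  define \<alpha> :: "nat \<Rightarrow> nat" where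
    "\<alpha> = (\<lambda>x::nat. if x = 0 then k + n else if x = 1 then k else if x = 2 then 1 else (0::nat))"
  have a0: "\<alpha> 0 = Suc (k + n - 1)" using n by (simp add: \<alpha>_def)
  have a1: "\<alpha> 1 \<le> k + n - 1" using n by (simp add: \<alpha>_def)
  have a3: "\<forall>x\<ge>3. \<alpha> x = 0" by (simp add: \<alpha>_def)
  have beq: "\<alpha>(0 := k + n - 1, 1 := Suc (\<alpha> 1)) =
     (\<lambda>x::nat. if x = 0 then k + n - 1 else if x = 1 then Suc k else if x = 2 then 1 else (0::nat))"
    by (auto simp: \<alpha>_def)
  have lo: "m + 1 \<le> csf_coeff (SV m n) (SE m n) \<alpha>"
    using caseC_lower[OF m k, of n] n unfolding \<alpha>_def by simp
  have up: "csf_coeff (SV m n) (SE m n) (\<alpha>(0 := k + n - 1, 1 := Suc (\<alpha> 1))) \<le> 2 * n"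
    unfolding beq using caseC_upper[OF m k n nk] by simp
  have lt: "csf_coeff (SV m n) (SE m n) (\<alpha>(0 := k + n - 1, 1 := Suc (\<alpha> 1))) < csf_coeff (SV m n) (SE m n) \<alpha>"
    using lo up m nk by linarith
  show ?thesis by (rule not_sp_from[OF lt a0 a1 a3])
qed


theorem theorem3p8:
  fixes m n :: nat
  assumes "3 \<le> m" and "2 \<le> n" and "m \<noteq> 2 * n - 1"
  shows "\<not> schur_positive (squid_vertices m n) (squid_adj m n)"
proof (cases "even m")
  case True
  then obtain k where mk: "m = 2 * k" by (auto elim: evenE)
  have "2 \<le> k" using mk assms(1) by simp
  then show ?thesis using caseA[OF mk _ assms(2)] by simp
next
  case False
  then obtain k where mk: "m = 2 * k + 1" by (auto elim: oddE)
  have k1: "1 \<le> k" using mk assms(1) by simp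
  consider "k + 2 \<le> n" | "n \<le> k" | "n = k + 1" by linarith
  then show ?thesis
  proof cases
    case 1 then show ?thesis using caseB[OF mk k1] by simp
  next
    case 2 then show ?thesis using caseC[OF mk assms(2)] by simp
  next
    case 3 then have "m = 2 * n - 1" using mk by simp
    then show ?thesis using assms(3) by simp
  qed
qed

end
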